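(* Fix $0<B<1$ and $H>0$, and let $\beta(s)=(x(s),0,z(s))$ be the curve with $$x(s)=\frac1H\sqrt{1+B^2+2B\sin\!\big(Hs+\tfrac{3\pi}{2}\big)},\qquad z(s)=\int_{3\pi/(2H)}^{\,s+3\pi/(2H)}\frac{1+B\sin(Ht)}{\sqrt{1+B^2+2B\sin(Ht)}}\,dt .$$ Then $\beta$ is parametrized by arc length and $z'(s)>0$ for all $s$. Let $s_0>0$ be the smallest positive value with $x''(s_0)=0$ (so $\cos(Hs_0)=B$, i.e. $s_0=\frac1H\arccos B$), and let $g:[-s_0,s_0]\to\mathbb R$, $g(s)=x(s)-\frac{x'(s)}{z'(s)}z(s)$. Then: (i) $g(0)=\frac{1-B}{H}>0$; (ii) $g'(0)=g'(s_0)=0$; (iii) $g$ is increasing on $(-s_0,0)$ and decreasing on $(0,s_0)$.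
   Context: Rotating $\beta$ about the $z$-axis gives a Delaunay unduloid (embedded complete surface of revolution with constant mean curvature $H$, where mean curvature is the unnormalized sum of principal curvatures) whose neck lies in the plane $z=0$ at $s=0$. *)

theory Defs
  imports "HOL-Analysis.Analysis"
begin

definition xfun :: "real \<Rightarrow> real \<Rightarrow> real \<Rightarrow> real" where
  "xfun B H s = (1 / H) * sqrt (1 + B^2 + 2 * B * sin (H * s + 3 * pi / 2))"

text \<open>Oriented integral from 3pi/(2H) to s + 3pi/(2H) (Lebesgue interval integral, sign-correct
  when the upper limit is below the lower one).\<close>
definition zfun :: "real \<Rightarrow> real \<Rightarrow> real \<Rightarrow> real" where
  "zfun B H s = (LBINT t = 3 * pi / (2 * H) .. s + 3 * pi / (2 * H).
       (1 + B * sin (H * t)) / sqrt (1 + B^2 + 2 * B * sin (H * t)))"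

definition gfun :: "real \<Rightarrow> real \<Rightarrow> real \<Rightarrow> real" where
  "gfun B H s = xfun B H s - deriv (xfun B H) s / deriv (zfun B H) s * zfun B H s"

end

theory Submission
  imports Defs
begin

lemma sin3: "sin (x + 3 * pi / 2) = - cos (x::real)"
proof -
  have "sin (x + 3 * pi / 2) = sin ((x + pi/2) + pi)" by (rule arg_cong[where f=sin]) simp
  also have "\<dots> = - sin (x + pi/2)" by (rule sin_periodic_pi)
  also have "\<dots> = - cos x" by (simp add: sin_add)
  finally show ?thesis .
qed

lemma Dpos: fixes B c :: real assumes "0 < B" "B < 1" "\<bar>c\<bar> \<le> 1"
  shows "0 < 1 + B^2 + 2 * B * c"
proof -
  have "2 * B * (-1) \<le> 2 * B * c" using assms by (intro mult_left_mono) auto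
  moreover have "0 < (1-B)^2" using assms by simp
  ultimately show ?thesis by (simp add: power2_eq_square algebra_simps)
qed

lemma Dpos': fixes B c :: real assumes "0 < B" "B < 1" "\<bar>c\<bar> \<le> 1"
  shows "0 < 1 + B^2 - 2 * B * c"
  using Dpos[of B "-c"] assms by simp

lemma Epos: fixes B c :: real assumes "0 < B" "B < 1" "\<bar>c\<bar> \<le> 1"
  shows "0 < 1 - B * c"
proof -
  have "B * c \<le> B * 1" using assms by (intro mult_left_mono) auto
  then show ?thesis using assms by linarith
qed

lemma xfun_eq: assumes "H \<noteq> 0"
  shows "xfun B H = (\<lambda>s. sqrt (1 + B^2 - 2 * B * cos (H * s)) / H)"
  by (rule ext) (simp add: xfun_def sin3)

lemma sqrt_der: assumes "(f has_real_derivative f') (at s)" "0 < f s"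
  shows "((\<lambda>s. sqrt (f s)) has_real_derivative f' / (2 * sqrt (f s))) (at s)"
proof -
  have "((\<lambda>s. sqrt (f s)) has_real_derivative inverse (sqrt (f s)) / 2 * f') (at s)"
    by (rule DERIV_chain2[OF DERIV_real_sqrt[OF assms(2)] assms(1)])
  then show ?thesis by (simp add: field_simps)
qed

lemma Dder: "((\<lambda>s. 1 + B^2 - 2 * B * cos (H * s)) has_real_derivative 2 * B * H * sin (H * s)) (at s)"
  by (auto intro!: derivative_eq_intros)

lemma xder: assumes "0 < B" "B < 1" "0 < H"
  shows "(xfun B H has_real_derivative B * sin (H * s) / sqrt (1 + B^2 - 2 * B * cos (H * s))) (at s)"
proof -
  have D: "0 < 1 + B^2 - 2 * B * cos (H * s)" using Dpos' assms abs_cos_le_one by blast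
  have "((\<lambda>s. sqrt (1 + B^2 - 2 * B * cos (H * s)) / H) has_real_derivative (2 * B * H * sin (H * s) / (2 * sqrt (1 + B^2 - 2 * B * cos (H * s)))) / H) (at s)"
    by (intro DERIV_cdivide sqrt_der Dder D)
  then show ?thesis unfolding xfun_eq[OF less_imp_neq[OF assms(3), symmetric]]
    using assms by (simp add: field_simps)
qed

lemma contF: assumes "0 < B" "B < 1"
  shows "continuous_on UNIV (\<lambda>t. (1 + B * sin (H * t)) / sqrt (1 + B^2 + 2 * B * sin (H * t)))"
proof -
  have q: "\<And>t. 0 < 1 + B^2 + 2 * B * sin (H * t)" by (rule Dpos[OF assms abs_sin_le_one])
  have p: "\<And>t. sqrt (1 + B^2 + 2 * B * sin (H * t)) \<noteq> 0" using q by (metis real_sqrt_gt_zero less_irrefl)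
  show ?thesis by (intro continuous_intros) (use p in auto)
qed

lemma FTC_at: fixes f :: "real \<Rightarrow> real" and c :: real assumes "continuous_on UNIV f"
  shows "((\<lambda>u. LBINT y=c..u. f y) has_real_derivative f x) (at x)"
proof -
  let ?a = "min c x - 1" and ?b = "max c x + 1"
  have "((\<lambda>u. LBINT y=c..u. f y) has_vector_derivative (f x)) (at x within {?a..?b})"
    by (rule interval_integral_FTC2) (auto intro: continuous_on_subset[OF assms])
  then have "((\<lambda>u. LBINT y=c..u. f y) has_vector_derivative (f x)) (at x within {?a<..<?b})"
    by (rule has_vector_derivative_within_subset) auto
  then have "((\<lambda>u. LBINT y=c..u. f y) has_vector_derivative (f x)) (at x)"
    by (subst (asm) has_vector_derivative_within_open) auto
  then show ?thesis by (simp add: has_real_derivative_iff_has_vector_derivative)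
qed

lemma zder: assumes "0 < B" "B < 1" "0 < H"
  shows "(zfun B H has_real_derivative (1 - B * cos (H * s)) / sqrt (1 + B^2 - 2 * B * cos (H * s))) (at s)"
proof -
  define c where "c = 3 * pi / (2 * H)"
  define F where "F = (\<lambda>u. LBINT y=c..u. (1 + B * sin (H * y)) / sqrt (1 + B^2 + 2 * B * sin (H * y)))"
  have e: "zfun B H = (\<lambda>s. F (s + c))"
    by (rule ext) (simp add: zfun_def F_def c_def)
  have d1: "((\<lambda>s. s + c) has_real_derivative 1) (at s)"
    by (auto intro!: derivative_eq_intros)
  have d2: "(F has_real_derivative (1 + B * sin (H * (s + c))) / sqrt (1 + B^2 + 2 * B * sin (H * (s + c)))) (at (s + c))"
    unfolding F_def by (rule FTC_at[OF contF[OF assms(1,2)]])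
  have "(zfun B H has_real_derivative (1 + B * sin (H * (s + c))) / sqrt (1 + B^2 + 2 * B * sin (H * (s + c))) * 1) (at s)"
    unfolding e by (rule DERIV_chain2[OF d2 d1])
  moreover have "H * (s + c) = H * s + 3 * pi / 2" using assms by (simp add: c_def field_simps)
  ultimately show ?thesis by (simp add: sin3)
qed

lemma deriv_x: assumes "0 < B" "B < 1" "0 < H"
  shows "deriv (xfun B H) = (\<lambda>s. B * sin (H * s) / sqrt (1 + B^2 - 2 * B * cos (H * s)))"
  by (rule ext, rule DERIV_imp_deriv, rule xder[OF assms])

lemma deriv_z: assumes "0 < B" "B < 1" "0 < H"
  shows "deriv (zfun B H) = (\<lambda>s. (1 - B * cos (H * s)) / sqrt (1 + B^2 - 2 * B * cos (H * s)))"
  by (rule ext, rule DERIV_imp_deriv, rule zder[OF assms])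

lemma x2der: assumes "0 < B" "B < 1" "0 < H"
  shows "((\<lambda>s. B * sin (H * s) / sqrt (1 + B^2 - 2 * B * cos (H * s))) has_real_derivative
     B * H * (cos (H * s) - B) * (1 - B * cos (H * s)) / ((1 + B^2 - 2 * B * cos (H * s)) * sqrt (1 + B^2 - 2 * B * cos (H * s)))) (at s)"
proof -
  define D where "D = 1 + B^2 - 2 * B * cos (H * s)"
  define q where "q = sqrt D"
  have D: "0 < D" unfolding D_def using Dpos' assms abs_cos_le_one by blast
  have q: "0 < q" "q * q = D" unfolding q_def using D by auto
  have d1: "((\<lambda>s. B * sin (H * s)) has_real_derivative B * (cos (H * s) * (H * 1))) (at s)"
    by (auto intro!: derivative_eq_intros)
  have d2: "((\<lambda>s. sqrt (1 + B^2 - 2 * B * cos (H * s))) has_real_derivative 2 * B * H * sin (H * s) / (2 * q)) (at s)"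
    unfolding q_def D_def by (intro sqrt_der Dder) (use D in \<open>simp add: D_def\<close>)
  have "((\<lambda>s. B * sin (H * s) / sqrt (1 + B^2 - 2 * B * cos (H * s))) has_real_derivative
      (B * (cos (H * s) * (H * 1)) * q - B * sin (H * s) * (2 * B * H * sin (H * s) / (2 * q))) / (q * q)) (at s)"
    using DERIV_divide[OF d1 d2] q unfolding q_def D_def by simp
  moreover have "(B * (cos (H * s) * (H * 1)) * q - B * sin (H * s) * (2 * B * H * sin (H * s) / (2 * q))) / (q * q)
      = B * H * (cos (H * s) - B) * (1 - B * cos (H * s)) / (D * q)"
  proof -
    have ss: "sin (H * s) ^ 2 = 1 - cos (H * s) ^ 2" by (simp add: sin_squared_eq)
    have "(B * (cos (H * s) * (H * 1)) * q - B * sin (H * s) * (2 * B * H * sin (H * s) / (2 * q))) / (q * q)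
        = B * H * (cos (H * s) * (q * q) - B * sin (H * s) ^ 2) / (D * q)"
      using q by (simp add: field_simps power2_eq_square)
    also have "\<dots> = B * H * (cos (H * s) - B) * (1 - B * cos (H * s)) / (D * q)"
      unfolding ss q(2) D_def by (simp add: algebra_simps power2_eq_square)
    finally show ?thesis .
  qed
  ultimately show ?thesis unfolding q_def D_def by simp
qed

lemma hder: assumes "0 < B" "B < 1" "0 < H"
  shows "((\<lambda>s. B * sin (H * s) / (1 - B * cos (H * s))) has_real_derivative
     B * H * (cos (H * s) - B) / (1 - B * cos (H * s))^2) (at s)"
proof -
  define E where "E = 1 - B * cos (H * s)"
  have E: "0 < E" unfolding E_def using Epos assms abs_cos_le_one by blast
  have d1: "((\<lambda>s. B * sin (H * s)) has_real_derivative B * (cos (H * s) * (H * 1))) (at s)"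
    by (auto intro!: derivative_eq_intros)
  have d2: "((\<lambda>s. 1 - B * cos (H * s)) has_real_derivative 0 - B * (- sin (H * s) * (H * 1))) (at s)"
    by (auto intro!: derivative_eq_intros)
  have "((\<lambda>s. B * sin (H * s) / (1 - B * cos (H * s))) has_real_derivative
      (B * (cos (H * s) * (H * 1)) * E - B * sin (H * s) * (0 - B * (- sin (H * s) * (H * 1)))) / (E * E)) (at s)"
    using DERIV_divide[OF d1 d2] E unfolding E_def by simp
  moreover have "(B * (cos (H * s) * (H * 1)) * E - B * sin (H * s) * (0 - B * (- sin (H * s) * (H * 1)))) / (E * E)
     = B * H * (cos (H * s) - B) / E^2"
  proof -
    have ss: "sin (H * s) ^ 2 = 1 - cos (H * s) ^ 2" by (simp add: sin_squared_eq)
    have "(B * (cos (H * s) * (H * 1)) * E - B * sin (H * s) * (0 - B * (- sin (H * s) * (H * 1))))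
       = B * H * (cos (H * s) * E - B * sin (H * s) ^ 2)" by (simp add: algebra_simps power2_eq_square)
    also have "\<dots> = B * H * (cos (H * s) - B)" unfolding ss E_def by (simp add: algebra_simps power2_eq_square)
    finally show ?thesis by (simp add: power2_eq_square)
  qed
  ultimately show ?thesis unfolding E_def by simp
qed

lemma z0: "zfun B H 0 = 0" by (simp add: zfun_def)

lemma zpos_der: assumes "0 < B" "B < 1" "0 < H"
  shows "0 < (1 - B * cos (H * s)) / sqrt (1 + B^2 - 2 * B * cos (H * s))"
  using Epos[OF assms(1,2) abs_cos_le_one] Dpos'[OF assms(1,2) abs_cos_le_one] by simp

lemma zsign: assumes "0 < B" "B < 1" "0 < H"
  shows "0 < s \<Longrightarrow> 0 < zfun B H s" "s < 0 \<Longrightarrow> zfun B H s < 0"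
proof -
  have d: "\<And>x. \<exists>y. DERIV (zfun B H) x :> y \<and> 0 < y"
    using zder[OF assms] zpos_der[OF assms] by blast
  show "0 < s \<Longrightarrow> 0 < zfun B H s" using DERIV_pos_imp_increasing[of 0 s "zfun B H"] d z0 by metis
  show "s < 0 \<Longrightarrow> zfun B H s < 0" using DERIV_pos_imp_increasing[of s 0 "zfun B H"] d z0 by metis
qed

lemma gfun_eq: assumes "0 < B" "B < 1" "0 < H"
  shows "gfun B H = (\<lambda>s. sqrt (1 + B^2 - 2 * B * cos (H * s)) / H - B * sin (H * s) / (1 - B * cos (H * s)) * zfun B H s)"
proof (rule ext)
  fix s
  have D: "0 < sqrt (1 + B^2 - 2 * B * cos (H * s))" using Dpos'[OF assms(1,2) abs_cos_le_one] by simp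
  have E: "0 < 1 - B * cos (H * s)" using Epos[OF assms(1,2) abs_cos_le_one] .
  show "gfun B H s = sqrt (1 + B^2 - 2 * B * cos (H * s)) / H - B * sin (H * s) / (1 - B * cos (H * s)) * zfun B H s"
    unfolding gfun_def deriv_x[OF assms] deriv_z[OF assms]
    using D E by (simp add: xfun_eq[OF less_imp_neq[OF assms(3), symmetric]])
qed

lemma gder: assumes "0 < B" "B < 1" "0 < H"
  shows "(gfun B H has_real_derivative - (B * H * (cos (H * s) - B) / (1 - B * cos (H * s))^2) * zfun B H s) (at s)"
proof -
  let ?q = "sqrt (1 + B^2 - 2 * B * cos (H * s))"
  have D: "0 < ?q" using Dpos'[OF assms(1,2) abs_cos_le_one] by simp
  have E: "0 < 1 - B * cos (H * s)" using Epos[OF assms(1,2) abs_cos_le_one] .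
  have dx: "((\<lambda>s. sqrt (1 + B^2 - 2 * B * cos (H * s)) / H) has_real_derivative B * sin (H * s) / ?q) (at s)"
    using xder[OF assms] unfolding xfun_eq[OF less_imp_neq[OF assms(3), symmetric]] .
  have "(gfun B H has_real_derivative B * sin (H * s) / ?q -
     (B * H * (cos (H * s) - B) / (1 - B * cos (H * s))^2 * zfun B H s + ((1 - B * cos (H * s)) / ?q) * (B * sin (H * s) / (1 - B * cos (H * s))))) (at s)"
    unfolding gfun_eq[OF assms] by (intro DERIV_diff dx DERIV_mult hder[OF assms] zder[OF assms])
  moreover have "((1 - B * cos (H * s)) / ?q) * (B * sin (H * s) / (1 - B * cos (H * s))) = B * sin (H * s) / ?q"
    using E by simp
  ultimately show ?thesis by simp
qed

theorem lemma3p3: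
  fixes B H :: real
  assumes "0 < B" "B < 1" "0 < H"
  defines "s0 \<equiv> arccos B / H"
  shows "(\<forall>s. xfun B H differentiable at s \<and> zfun B H differentiable at s \<and>
              (deriv (xfun B H) s)\<^sup>2 + (deriv (zfun B H) s)\<^sup>2 = 1) \<and>
         (\<forall>s. deriv (zfun B H) s > 0) \<and>
         (0 < s0 \<and> (\<forall>s. deriv (xfun B H) differentiable at s) \<and>
          deriv (deriv (xfun B H)) s0 = 0 \<and>
          (\<forall>s. 0 < s \<and> s < s0 \<longrightarrow> deriv (deriv (xfun B H)) s \<noteq> 0) \<and>
          cos (H * s0) = B) \<and>
         (gfun B H 0 = (1 - B) / H \<and> (1 - B) / H > 0) \<and>
         ((gfun B H has_real_derivative 0) (at 0) \<and>
          (gfun B H has_real_derivative 0) (at s0)) \<and>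
         (strict_mono_on {-s0<..<0} (gfun B H) \<and>
          strict_antimono_on {0<..<s0} (gfun B H))"
proof -
  note A = assms(1,2,3)
  have ab: "0 < arccos B" "arccos B < pi" using arccos_lt_bounded[of B] A by auto
  have s0p: "0 < s0" unfolding s0_def using ab A by simp
  have Hs0: "H * s0 = arccos B" unfolding s0_def using A by simp
  have cs0: "cos (H * s0) = B" unfolding Hs0 using A by simp
  have cgt: "B < cos (H * s)" if "0 < \<bar>s\<bar>" "\<bar>s\<bar> < s0" for s
  proof -
    have "cos (H * s) = cos \<bar>H * s\<bar>" by (simp add: abs_if)
    also have "\<bar>H * s\<bar> = H * \<bar>s\<bar>" using A by (simp add: abs_mult)
    finally have "cos (H * s) = cos (H * \<bar>s\<bar>)" .
    moreover have "cos (arccos B) < cos (H * \<bar>s\<bar>)"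
    proof (rule cos_monotone_0_pi)
      show "0 \<le> H * \<bar>s\<bar>" using A by simp
      show "H * \<bar>s\<bar> < arccos B" unfolding Hs0[symmetric] using that A by simp
      show "arccos B \<le> pi" using ab by simp
    qed
    ultimately show ?thesis using A by simp
  qed
  have diff: "f differentiable at s" if "(f has_real_derivative d) (at s)" for f d s
    using that real_differentiable_def by blast
  have P1: "\<forall>s. xfun B H differentiable at s \<and> zfun B H differentiable at s \<and>
              (deriv (xfun B H) s)\<^sup>2 + (deriv (zfun B H) s)\<^sup>2 = 1"
  proof
    fix s
    have D: "0 < 1 + B^2 - 2 * B * cos (H * s)" using Dpos'[OF A(1,2) abs_cos_le_one] .
    have "(B * sin (H * s) / sqrt (1 + B^2 - 2 * B * cos (H * s)))^2 + ((1 - B * cos (H * s)) / sqrt (1 + B^2 - 2 * B * cos (H * s)))^2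
       = ((B * sin (H * s))^2 + (1 - B * cos (H * s))^2) / (1 + B^2 - 2 * B * cos (H * s))"
      using D by (simp add: power_divide add_divide_distrib)
    also have "(B * sin (H * s))^2 + (1 - B * cos (H * s))^2 = 1 + B^2 - 2 * B * cos (H * s)"
      using sin_cos_squared_add[of "H * s"] by algebra
    finally show "xfun B H differentiable at s \<and> zfun B H differentiable at s \<and>
              (deriv (xfun B H) s)\<^sup>2 + (deriv (zfun B H) s)\<^sup>2 = 1"
      using D diff[OF xder[OF A]] diff[OF zder[OF A]] by (simp add: deriv_x[OF A] deriv_z[OF A])
  qed
  have P2: "\<forall>s. deriv (zfun B H) s > 0" using zpos_der[OF A] by (simp add: deriv_z[OF A])
  have dd: "deriv (deriv (xfun B H)) s = B * H * (cos (H * s) - B) * (1 - B * cos (H * s)) / ((1 + B^2 - 2 * B * cos (H * s)) * sqrt (1 + B^2 - 2 * B * cos (H * s)))" for s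
    unfolding deriv_x[OF A] by (rule DERIV_imp_deriv, rule x2der[OF A])
  have P3: "\<forall>s. deriv (xfun B H) differentiable at s"
    unfolding deriv_x[OF A] using diff[OF x2der[OF A]] by blast
  have P4: "\<forall>s. 0 < s \<and> s < s0 \<longrightarrow> deriv (deriv (xfun B H)) s \<noteq> 0"
  proof (intro allI impI)
    fix s assume s: "0 < s \<and> s < s0"
    have c: "B < cos (H * s)" using cgt[of s] s by simp
    have D: "0 < 1 + B^2 - 2 * B * cos (H * s)" using Dpos'[OF A(1,2) abs_cos_le_one] .
    have E: "0 < 1 - B * cos (H * s)" using Epos[OF A(1,2) abs_cos_le_one] .
    show "deriv (deriv (xfun B H)) s \<noteq> 0" unfolding dd using A c D E by simp
  qed
  have P5: "deriv (deriv (xfun B H)) s0 = 0" unfolding dd cs0 by simp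
  have P6: "gfun B H 0 = (1 - B) / H"
  proof -
    have "sqrt (1 + B^2 - 2 * B) = sqrt ((1 - B)^2)" by (simp add: power2_eq_square algebra_simps)
    then show ?thesis using A by (simp add: gfun_eq[OF A] z0)
  qed
  have P7: "(gfun B H has_real_derivative 0) (at 0)" using gder[OF A, of 0] by (simp add: z0)
  have P8: "(gfun B H has_real_derivative 0) (at s0)" using gder[OF A, of s0] by (simp add: cs0)
  have hpos: "0 < B * H * (cos (H * s) - B) / (1 - B * cos (H * s))^2" if "0 < \<bar>s\<bar>" "\<bar>s\<bar> < s0" for s
  proof -
    have E: "0 < 1 - B * cos (H * s)" using Epos[OF A(1,2) abs_cos_le_one] .
    show ?thesis using cgt[OF that] E A by simp
  qed
  have P9: "strict_mono_on {-s0<..<0} (gfun B H)"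
  proof (rule strict_mono_onI)
    fix r t assume rt: "r \<in> {-s0<..<0}" "t \<in> {-s0<..<0}" "r < t"
    show "gfun B H r < gfun B H t"
    proof (rule DERIV_pos_imp_increasing[OF rt(3)])
      fix x assume x: "r \<le> x" "x \<le> t"
      define K where "K = B * H * (cos (H * x) - B) / (1 - B * cos (H * x))^2"
      have k: "0 < K" unfolding K_def using hpos[of x] x rt by simp
      have z: "zfun B H x < 0" using zsign(2)[OF A, of x] x rt by simp
      have "K * zfun B H x < 0" by (rule mult_pos_neg[OF k z])
      then have "0 < - K * zfun B H x" by simp
      then have "0 < - (B * H * (cos (H * x) - B) / (1 - B * cos (H * x))^2) * zfun B H x"
        unfolding K_def .
      then show "\<exists>y. DERIV (gfun B H) x :> y \<and> 0 < y" using gder[OF A] by blast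
    qed
  qed
  have P10: "strict_antimono_on {0<..<s0} (gfun B H)"
  proof (rule monotone_onI)
    fix r t assume rt: "r \<in> {0<..<s0}" "t \<in> {0<..<s0}" "r < t"
    show "gfun B H t < gfun B H r"
    proof (rule DERIV_neg_imp_decreasing[OF rt(3)])
      fix x assume x: "r \<le> x" "x \<le> t"
      define K where "K = B * H * (cos (H * x) - B) / (1 - B * cos (H * x))^2"
      have k: "0 < K" unfolding K_def using hpos[of x] x rt by simp
      have z: "0 < zfun B H x" using zsign(1)[OF A, of x] x rt by simp
      have "0 < K * zfun B H x" by (rule mult_pos_pos[OF k z])
      then have "- K * zfun B H x < 0" by simp
      then have "- (B * H * (cos (H * x) - B) / (1 - B * cos (H * x))^2) * zfun B H x < 0"
        unfolding K_def .
      then show "\<exists>y. DERIV (gfun B H) x :> y \<and> y < 0" using gder[OF A] by blast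
    qed
  qed
  show ?thesis using P1 P2 P3 P4 P5 P6 P7 P8 P9 P10 s0p cs0 A by simp
qed

end
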